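(* Let $K$ be a lattice of finite length. (i) If $e$ is a nonzero join-prime element of $K$, $f\in K$, and $e\le f$, then the subposet $L:=K\setminus[e,f]$ of $K$ is a lattice. (ii) Let $t$ be a positive integer and let $K_1,\dots,K_t$ be upper semimodular lattices of finite length. Let $K=K_1\times\dots\times K_t$, and let $e=(e_1,\dots,e_t)\in K$ be a nonzero join-prime element. Such an $e$ has exactly one index $i\in\{1,\dots,t\}$ with $e_i\neq 0_i$, where $0_j$ is the bottom of $K_j$. Let $f=(f_1,\dots,f_t)\in K$ be such that $f_i=1_i$, the top element of $K_i$. Then the subposet $L:=K\setminus[e,f]$ of $K$ is an upper semimodular lattice, and it is a join-subsemilattice of $K$.
   Context: An element $u$ of a lattice is join-prime if $u\le x\vee y$ implies $u\le x$ or $u\le y$. $[e,f]=\{x: e\le x\le f\}$ denotes an interval. A lattice is upper semimodular if for all $x,y$, $x\wedge y\prec x$ implies $y\prec x\vee y$, where $\prec$ is the covering relation. *)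

theory Defs
  imports Main "HOL-Library.FuncSet"
begin

text \<open>Posets are given relationally: a carrier set A together with an order relation le.
  Subposets carry the restricted order (same relation, smaller carrier).\<close>

definition poset_on :: "'a set \<Rightarrow> ('a \<Rightarrow> 'a \<Rightarrow> bool) \<Rightarrow> bool" where
  "poset_on A le \<longleftrightarrow>
     (\<forall>x\<in>A. le x x) \<and>
     (\<forall>x\<in>A. \<forall>y\<in>A. le x y \<and> le y x \<longrightarrow> x = y) \<and>
     (\<forall>x\<in>A. \<forall>y\<in>A. \<forall>z\<in>A. le x y \<and> le y z \<longrightarrow> le x z)"

definition is_lub :: "'a set \<Rightarrow> ('a \<Rightarrow> 'a \<Rightarrow> bool) \<Rightarrow> 'a \<Rightarrow> 'a \<Rightarrow> 'a \<Rightarrow> bool" where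
  "is_lub A le x y z \<longleftrightarrow> z \<in> A \<and> le x z \<and> le y z \<and>
     (\<forall>w\<in>A. le x w \<and> le y w \<longrightarrow> le z w)"

definition is_glb :: "'a set \<Rightarrow> ('a \<Rightarrow> 'a \<Rightarrow> bool) \<Rightarrow> 'a \<Rightarrow> 'a \<Rightarrow> 'a \<Rightarrow> bool" where
  "is_glb A le x y z \<longleftrightarrow> z \<in> A \<and> le z x \<and> le z y \<and>
     (\<forall>w\<in>A. le w x \<and> le w y \<longrightarrow> le w z)"

definition lattice_on :: "'a set \<Rightarrow> ('a \<Rightarrow> 'a \<Rightarrow> bool) \<Rightarrow> bool" where
  "lattice_on A le \<longleftrightarrow> poset_on A le \<and>
     (\<forall>x\<in>A. \<forall>y\<in>A. (\<exists>z. is_lub A le x y z) \<and> (\<exists>z. is_glb A le x y z))"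

definition ljoin :: "'a set \<Rightarrow> ('a \<Rightarrow> 'a \<Rightarrow> bool) \<Rightarrow> 'a \<Rightarrow> 'a \<Rightarrow> 'a" where
  "ljoin A le x y = (THE z. is_lub A le x y z)"

definition lmeet :: "'a set \<Rightarrow> ('a \<Rightarrow> 'a \<Rightarrow> bool) \<Rightarrow> 'a \<Rightarrow> 'a \<Rightarrow> 'a" where
  "lmeet A le x y = (THE z. is_glb A le x y z)"

definition lbot :: "'a set \<Rightarrow> ('a \<Rightarrow> 'a \<Rightarrow> bool) \<Rightarrow> 'a" where
  "lbot A le = (THE b. b \<in> A \<and> (\<forall>x\<in>A. le b x))"

definition ltop :: "'a set \<Rightarrow> ('a \<Rightarrow> 'a \<Rightarrow> bool) \<Rightarrow> 'a" where
  "ltop A le = (THE b. b \<in> A \<and> (\<forall>x\<in>A. le x b))"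

definition is_chain_in :: "'a set \<Rightarrow> ('a \<Rightarrow> 'a \<Rightarrow> bool) \<Rightarrow> 'a set \<Rightarrow> bool" where
  "is_chain_in A le C \<longleftrightarrow> C \<subseteq> A \<and> (\<forall>x\<in>C. \<forall>y\<in>C. le x y \<or> le y x)"

definition finite_length :: "'a set \<Rightarrow> ('a \<Rightarrow> 'a \<Rightarrow> bool) \<Rightarrow> bool" where
  "finite_length A le \<longleftrightarrow> (\<exists>n::nat. \<forall>C. is_chain_in A le C \<longrightarrow> finite C \<and> card C \<le> n)"

definition join_prime :: "'a set \<Rightarrow> ('a \<Rightarrow> 'a \<Rightarrow> bool) \<Rightarrow> 'a \<Rightarrow> bool" where
  "join_prime A le u \<longleftrightarrow> u \<in> A \<and>
     (\<forall>x\<in>A. \<forall>y\<in>A. le u (ljoin A le x y) \<longrightarrow> le u x \<or> le u y)"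

definition interval :: "'a set \<Rightarrow> ('a \<Rightarrow> 'a \<Rightarrow> bool) \<Rightarrow> 'a \<Rightarrow> 'a \<Rightarrow> 'a set" where
  "interval A le e f = {x \<in> A. le e x \<and> le x f}"

definition covers :: "'a set \<Rightarrow> ('a \<Rightarrow> 'a \<Rightarrow> bool) \<Rightarrow> 'a \<Rightarrow> 'a \<Rightarrow> bool" where
  "covers A le x y \<longleftrightarrow> x \<in> A \<and> y \<in> A \<and> le x y \<and> x \<noteq> y \<and>
     \<not> (\<exists>z\<in>A. le x z \<and> le z y \<and> z \<noteq> x \<and> z \<noteq> y)"

definition upper_semimodular :: "'a set \<Rightarrow> ('a \<Rightarrow> 'a \<Rightarrow> bool) \<Rightarrow> bool" where
  "upper_semimodular A le \<longleftrightarrow> lattice_on A le \<and>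
     (\<forall>x\<in>A. \<forall>y\<in>A. covers A le (lmeet A le x y) x \<longrightarrow> covers A le y (ljoin A le x y))"

definition prod_carrier :: "nat set \<Rightarrow> (nat \<Rightarrow> 'a set) \<Rightarrow> (nat \<Rightarrow> 'a) set" where
  "prod_carrier I B = PiE I B"

definition prod_le :: "nat set \<Rightarrow> (nat \<Rightarrow> 'a \<Rightarrow> 'a \<Rightarrow> bool) \<Rightarrow> (nat \<Rightarrow> 'a) \<Rightarrow> (nat \<Rightarrow> 'a) \<Rightarrow> bool" where
  "prod_le I le x y \<longleftrightarrow> (\<forall>j\<in>I. le j (x j) (y j))"

end

theory Submission
  imports Defs
begin
lemma po_refl: "poset_on A le \<Longrightarrow> x \<in> A \<Longrightarrow> le x x"
  unfolding poset_on_def by blast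
lemma po_antisym: "poset_on A le \<Longrightarrow> x\<in>A \<Longrightarrow> y\<in>A \<Longrightarrow> le x y \<Longrightarrow> le y x \<Longrightarrow> x = y"
  unfolding poset_on_def by blast
lemma po_trans: "poset_on A le \<Longrightarrow> x\<in>A \<Longrightarrow> y\<in>A \<Longrightarrow> z\<in>A \<Longrightarrow> le x y \<Longrightarrow> le y z \<Longrightarrow> le x z"
  unfolding poset_on_def by blast
lemma po_subset: "poset_on A le \<Longrightarrow> L \<subseteq> A \<Longrightarrow> poset_on L le"
  unfolding poset_on_def by blast
lemma po_dual: "poset_on A le \<Longrightarrow> poset_on A (\<lambda>x y. le y x)"
  unfolding poset_on_def by blast
lemma fl_dual: "finite_length A le \<Longrightarrow> finite_length A (\<lambda>x y. le y x)"
  unfolding finite_length_def is_chain_in_def by metis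

lemma lub_unique: "poset_on A le \<Longrightarrow> is_lub A le x y z \<Longrightarrow> is_lub A le x y z' \<Longrightarrow> z = z'"
  unfolding is_lub_def using po_antisym by metis
lemma glb_unique: "poset_on A le \<Longrightarrow> is_glb A le x y z \<Longrightarrow> is_glb A le x y z' \<Longrightarrow> z = z'"
  unfolding is_glb_def using po_antisym by metis
lemma ljoin_eq: "poset_on A le \<Longrightarrow> is_lub A le x y z \<Longrightarrow> ljoin A le x y = z"
  unfolding ljoin_def using lub_unique by (metis the_equality)
lemma lmeet_eq: "poset_on A le \<Longrightarrow> is_glb A le x y z \<Longrightarrow> lmeet A le x y = z"
  unfolding lmeet_def using glb_unique by (metis the_equality)
lemma ljoin_lub: "lattice_on A le \<Longrightarrow> x\<in>A \<Longrightarrow> y\<in>A \<Longrightarrow> is_lub A le x y (ljoin A le x y)"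
  unfolding lattice_on_def using ljoin_eq by metis
lemma lmeet_glb: "lattice_on A le \<Longrightarrow> x\<in>A \<Longrightarrow> y\<in>A \<Longrightarrow> is_glb A le x y (lmeet A le x y)"
  unfolding lattice_on_def using lmeet_eq by metis
lemma lbot_eq: "poset_on A le \<Longrightarrow> b \<in> A \<Longrightarrow> \<forall>x\<in>A. le b x \<Longrightarrow> lbot A le = b"
  unfolding lbot_def by (rule the_equality) (auto intro: po_antisym)
lemma ltop_eq: "poset_on A le \<Longrightarrow> b \<in> A \<Longrightarrow> \<forall>x\<in>A. le x b \<Longrightarrow> ltop A le = b"
  unfolding ltop_def by (rule the_equality) (auto intro: po_antisym)

lemma chain_max:
  assumes "poset_on A le" "finite C" "C \<noteq> {}" "is_chain_in A le C"
  shows "\<exists>m\<in>C. \<forall>c\<in>C. le c m"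
  using assms(2,3,4)
proof (induction C rule: finite_ne_induct)
  case (singleton x)
  then show ?case using po_refl[OF assms(1)] by (auto simp: is_chain_in_def)
next
  case (insert x F)
  then have ch: "is_chain_in A le F" by (auto simp: is_chain_in_def)
  then obtain m where m: "m\<in>F" "\<forall>c\<in>F. le c m" using insert by blast
  have xA: "x \<in> A" and mA: "m \<in> A" and FA: "F \<subseteq> A" using insert m by (auto simp: is_chain_in_def)
  show ?case
  proof (cases "le m x")
    case True
    have "\<forall>c\<in>insert x F. le c x"
    proof
      fix c assume c: "c \<in> insert x F"
      show "le c x"
      proof (cases "c = x")
        case True then show ?thesis using po_refl[OF assms(1) xA] by simp
      next
        case False
        then have "c \<in> F" using c by simp
        then show ?thesis using po_trans[OF assms(1), of c m x] m FA xA mA True by blast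
      qed
    qed
    then show ?thesis by blast
  next
    case False
    have "le m x \<or> le x m" using insert.prems m(1) unfolding is_chain_in_def by blast
    then have "le x m" using False by blast
    then show ?thesis using m by blast
  qed
qed

lemma greatest_exists:
  assumes po: "poset_on A le" and fl: "finite_length A le" and DA: "D \<subseteq> A" and ne: "D \<noteq> {}"
    and dir: "\<forall>u\<in>D. \<forall>v\<in>D. \<exists>w\<in>D. le u w \<and> le v w"
  shows "\<exists>m\<in>D. \<forall>z\<in>D. le z m"
proof -
  obtain n where n: "\<forall>C. is_chain_in A le C \<longrightarrow> finite C \<and> card C \<le> n"
    using fl unfolding finite_length_def by blast
  define S where "S = {card C | C. is_chain_in A le C \<and> C \<subseteq> D \<and> C \<noteq> {}}"
  have "S \<subseteq> {..n}"
  proof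
    fix k assume "k \<in> S"
    then obtain C where "k = card C" "is_chain_in A le C" unfolding S_def by blast
    then show "k \<in> {..n}" using n by simp
  qed
  then have Sfin: "finite S" using finite_subset by blast
  obtain d where d: "d \<in> D" using ne by blast
  have "is_chain_in A le {d}" using d DA po_refl[OF po] by (auto simp: is_chain_in_def)
  then have "card {d} \<in> S" using d unfolding S_def by blast
  then have Sne: "S \<noteq> {}" by blast
  have "Max S \<in> S" using Sfin Sne by simp
  then have "\<exists>C. Max S = card C \<and> is_chain_in A le C \<and> C \<subseteq> D \<and> C \<noteq> {}"
    unfolding S_def by (simp only: mem_Collect_eq)
  then obtain C where C: "is_chain_in A le C" "C \<subseteq> D" "C \<noteq> {}" "card C = Max S"
    by (elim exE conjE) (rule that, assumption+, rule sym)
  have Cfin: "finite C" using n C(1) by blast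
  obtain m where m: "m \<in> C" "\<forall>c\<in>C. le c m" using chain_max[OF po Cfin C(3) C(1)] by blast
  have "\<forall>z\<in>D. le z m"
  proof
    fix z assume z: "z \<in> D"
    obtain w where w: "w \<in> D" "le m w" "le z w" using dir z m C(2) by blast
    show "le z m"
    proof (cases "w = m")
      case True then show ?thesis using w by simp
    next
      case False
      have mA: "m \<in> A" "w \<in> A" using m w C DA by auto
      have wC: "w \<notin> C"
      proof
        assume "w \<in> C"
        then have "le w m" using m(2) by blast
        then show False using False po_antisym[OF po, of w m] mA w(2) by simp
      qed
      have "is_chain_in A le (insert w C)"
      proof -
        have cw: "\<forall>c\<in>C. le c w"
        proof
          fix c assume c: "c \<in> C"
          then have "c \<in> A" using C(1) unfolding is_chain_in_def by blast
          then show "le c w" using po_trans[OF po, of c m w] m(2) c w(2) mA by blast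
        qed
        have ww: "le w w" using po_refl[OF po, of w] mA by simp
        have "insert w C \<subseteq> A" using C(1) mA unfolding is_chain_in_def by blast
        moreover have "\<forall>x\<in>insert w C. \<forall>y\<in>insert w C. le x y \<or> le y x"
          using C(1) cw ww unfolding is_chain_in_def by blast
        ultimately show ?thesis unfolding is_chain_in_def by blast
      qed
      then have "card (insert w C) \<in> S" unfolding S_def using C w by blast
      then have "card (insert w C) \<le> Max S" using Sfin by simp
      then show ?thesis using Cfin wC C(4) by simp
    qed
  qed
  then show ?thesis using m(1) C(2) by blast
qed

lemma has_top:
  assumes "lattice_on A le" "finite_length A le" "A \<noteq> {}"
  shows "\<exists>b\<in>A. \<forall>x\<in>A. le x b"
proof -
  have po: "poset_on A le" using assms unfolding lattice_on_def by blast
  have "\<forall>u\<in>A. \<forall>v\<in>A. \<exists>w\<in>A. le u w \<and> le v w"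
    using ljoin_lub[OF assms(1)] unfolding is_lub_def by blast
  then show ?thesis
    using greatest_exists[of A le A, OF po assms(2)] assms(3) by blast
qed

lemma has_bot:
  assumes "lattice_on A le" "finite_length A le" "A \<noteq> {}"
  shows "\<exists>b\<in>A. \<forall>x\<in>A. le b x"
proof -
  have po: "poset_on A le" using assms unfolding lattice_on_def by blast
  have "\<forall>u\<in>A. \<forall>v\<in>A. \<exists>w\<in>A. le w u \<and> le w v"
    using lmeet_glb[OF assms(1)] unfolding is_glb_def by blast
  then show ?thesis
    using greatest_exists[of A "\<lambda>x y. le y x" A, OF po_dual[OF po] fl_dual[OF assms(2)]] assms(3) by blast
qed

lemma ljoin_le: "lattice_on A le \<Longrightarrow> x\<in>A \<Longrightarrow> y\<in>A \<Longrightarrow> le x y \<Longrightarrow> ljoin A le x y = y"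
proof -
  assume lat: "lattice_on A le" and x: "x\<in>A" and y: "y\<in>A" and xy: "le x y"
  have po: "poset_on A le" using lat unfolding lattice_on_def by (rule conjunct1)
  have "is_lub A le x y y" unfolding is_lub_def using y xy po_refl[OF po y] by blast
  then show ?thesis by (rule ljoin_eq[OF po])
qed

lemma covers_sub: "covers K le a b \<Longrightarrow> L \<subseteq> K \<Longrightarrow> a \<in> L \<Longrightarrow> b \<in> L \<Longrightarrow> covers L le a b"
  unfolding covers_def by blast

lemma L_join:
  assumes lat: "lattice_on A le" and jp: "join_prime A le e" and fA: "f \<in> A"
    and x: "x \<in> A - interval A le e f" and y: "y \<in> A - interval A le e f"
  shows "ljoin A le x y \<in> A - interval A le e f"
    and "is_lub (A - interval A le e f) le x y (ljoin A le x y)"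
proof -
  have po: "poset_on A le" using lat unfolding lattice_on_def by blast
  have xA: "x \<in> A" and yA: "y \<in> A" using x y by auto
  have lub: "is_lub A le x y (ljoin A le x y)" using ljoin_lub[OF lat xA yA] .
  then have jA: "ljoin A le x y \<in> A" and xj: "le x (ljoin A le x y)" and yj: "le y (ljoin A le x y)"
    unfolding is_lub_def by auto
  show jL: "ljoin A le x y \<in> A - interval A le e f"
  proof
    show "ljoin A le x y \<in> A" using jA .
    show "ljoin A le x y \<notin> interval A le e f"
    proof
      assume "ljoin A le x y \<in> interval A le e f"
      then have ej: "le e (ljoin A le x y)" and jf: "le (ljoin A le x y) f" unfolding interval_def by auto
      have "le e x \<or> le e y" using jp ej xA yA unfolding join_prime_def by blast
      then show False
      proof
        assume ex: "le e x"
        have "le x f" using po_trans[OF po xA jA fA xj jf] .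
        then show False using x ex unfolding interval_def by blast
      next
        assume ey: "le e y"
        have "le y f" using po_trans[OF po yA jA fA yj jf] .
        then show False using y ey unfolding interval_def by blast
      qed
    qed
  qed
  show "is_lub (A - interval A le e f) le x y (ljoin A le x y)"
    using lub jL unfolding is_lub_def by blast
qed

lemma part1:
  assumes lat: "lattice_on A le" and fl: "finite_length A le" and jp: "join_prime A le e"
    and nb: "e \<noteq> lbot A le" and fA: "f \<in> A" and ef: "le e f"
  shows "lattice_on (A - interval A le e f) le"
proof -
  let ?L = "A - interval A le e f"
  have po: "poset_on A le" using lat unfolding lattice_on_def by blast
  have eA: "e \<in> A" using jp unfolding join_prime_def by blast
  obtain b where b: "b \<in> A" "\<forall>x\<in>A. le b x" using has_bot[OF lat fl] eA by blast
  have bL: "b \<in> ?L"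
  proof
    show "b \<in> A" using b by simp
    show "b \<notin> interval A le e f"
    proof
      assume "b \<in> interval A le e f"
      then have "le e b" unfolding interval_def by blast
      then have "e = b" using po_antisym[OF po eA b(1)] b eA by blast
      moreover have "lbot A le = b" using lbot_eq[OF po b(1)] b(2) .
      ultimately show False using nb by simp
    qed
  qed
  have "\<forall>x\<in>?L. \<forall>y\<in>?L. (\<exists>z. is_lub ?L le x y z) \<and> (\<exists>z. is_glb ?L le x y z)"
  proof (intro ballI conjI)
    fix x y assume x: "x \<in> ?L" and y: "y \<in> ?L"
    show "\<exists>z. is_lub ?L le x y z" using L_join(2)[OF lat jp fA x y] by blast
    define D where "D = {z\<in>?L. le z x \<and> le z y}"
    have DA: "D \<subseteq> A" unfolding D_def by blast
    have "b \<in> D" unfolding D_def using bL b x y by blast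
    then have Dne: "D \<noteq> {}" by blast
    have dir: "\<forall>u\<in>D. \<forall>v\<in>D. \<exists>w\<in>D. le u w \<and> le v w"
    proof (intro ballI)
      fix u v assume u: "u \<in> D" and v: "v \<in> D"
      have uL: "u \<in> ?L" and vL: "v \<in> ?L" using u v unfolding D_def by auto
      have lub: "is_lub A le u v (ljoin A le u v)" using ljoin_lub[OF lat] uL vL by blast
      have jL: "ljoin A le u v \<in> ?L" using L_join(1)[OF lat jp fA uL vL] .
      have "le (ljoin A le u v) x" using lub u v x unfolding is_lub_def D_def by blast
      moreover have "le (ljoin A le u v) y" using lub u v y unfolding is_lub_def D_def by blast
      ultimately have "ljoin A le u v \<in> D" using jL unfolding D_def by blast
      then show "\<exists>w\<in>D. le u w \<and> le v w" using lub unfolding is_lub_def by blast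
    qed
    obtain m where m: "m \<in> D" "\<forall>z\<in>D. le z m" using greatest_exists[OF po fl DA Dne dir] by blast
    have "is_glb ?L le x y m"
      unfolding is_glb_def
    proof (intro conjI ballI impI)
      show "m \<in> ?L" "le m x" "le m y" using m(1) unfolding D_def by auto
      fix w assume "w \<in> ?L" "le w x \<and> le w y"
      then have "w \<in> D" unfolding D_def by blast
      then show "le w m" using m(2) by blast
    qed
    then show "\<exists>z. is_glb ?L le x y z" by blast
  qed
  moreover have "poset_on ?L le" using po_subset[OF po] by blast
  ultimately show ?thesis unfolding lattice_on_def by blast
qed

lemma upd_PiE: "u \<in> PiE I B \<Longrightarrow> j \<in> I \<Longrightarrow> a \<in> B j \<Longrightarrow> u(j:=a) \<in> PiE I B"
  by (auto simp: PiE_iff extensional_def)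

lemma prod_po:
  assumes "\<forall>j\<in>I. poset_on (B j) (le j)"
  shows "poset_on (PiE I B) (prod_le I le)"
  unfolding poset_on_def prod_le_def
proof (intro conjI ballI impI)
  fix x assume x: "x \<in> PiE I B"
  fix j assume "j \<in> I" then show "le j (x j) (x j)" using assms x po_refl PiE_mem by metis
next
  fix x y assume x: "x \<in> PiE I B" and y: "y \<in> PiE I B"
    and h: "(\<forall>j\<in>I. le j (x j) (y j)) \<and> (\<forall>j\<in>I. le j (y j) (x j))"
  show "x = y"
  proof (rule PiE_ext[OF x y])
    fix i assume i: "i \<in> I"
    show "x i = y i" using po_antisym[of "B i" "le i" "x i" "y i"] assms i h PiE_mem[OF x i] PiE_mem[OF y i] by blast
  qed
next
  fix x y z j assume x: "x \<in> PiE I B" and y: "y \<in> PiE I B" and z: "z \<in> PiE I B"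
    and h: "(\<forall>j\<in>I. le j (x j) (y j)) \<and> (\<forall>j\<in>I. le j (y j) (z j))" and j: "j \<in> I"
  show "le j (x j) (z j)"
    using po_trans[of "B j" "le j" "x j" "y j" "z j"] assms j h PiE_mem[OF x j] PiE_mem[OF y j] PiE_mem[OF z j] by blast
qed

lemma prod_lub:
  assumes lat: "\<forall>j\<in>I. lattice_on (B j) (le j)" and x: "x \<in> PiE I B" and y: "y \<in> PiE I B"
  shows "is_lub (PiE I B) (prod_le I le) x y (\<lambda>j\<in>I. ljoin (B j) (le j) (x j) (y j))"
proof -
  have L: "\<And>j. j \<in> I \<Longrightarrow> is_lub (B j) (le j) (x j) (y j) (ljoin (B j) (le j) (x j) (y j))"
  proof -
    fix j assume j: "j \<in> I"
    have "lattice_on (B j) (le j)" using lat j by blast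
    then show "is_lub (B j) (le j) (x j) (y j) (ljoin (B j) (le j) (x j) (y j))"
      by (rule ljoin_lub) (rule PiE_mem[OF x j], rule PiE_mem[OF y j])
  qed
  show ?thesis unfolding is_lub_def prod_le_def
  proof (intro conjI ballI impI)
    have "\<forall>j\<in>I. ljoin (B j) (le j) (x j) (y j) \<in> B j" using L unfolding is_lub_def by blast
    then show "(\<lambda>j\<in>I. ljoin (B j) (le j) (x j) (y j)) \<in> PiE I B" by simp
  next
    fix j assume "j \<in> I" then show "le j (x j) ((\<lambda>j\<in>I. ljoin (B j) (le j) (x j) (y j)) j)"
      using L unfolding is_lub_def by simp
  next
    fix j assume "j \<in> I" then show "le j (y j) ((\<lambda>j\<in>I. ljoin (B j) (le j) (x j) (y j)) j)"
      using L unfolding is_lub_def by simp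
  next
    fix w j assume w: "w \<in> PiE I B" and h: "(\<forall>j\<in>I. le j (x j) (w j)) \<and> (\<forall>j\<in>I. le j (y j) (w j))"
      and j: "j \<in> I"
    have "le j (ljoin (B j) (le j) (x j) (y j)) (w j)"
      using L[OF j] PiE_mem[OF w j] h j unfolding is_lub_def by blast
    then show "le j ((\<lambda>j\<in>I. ljoin (B j) (le j) (x j) (y j)) j) (w j)" using j by simp
  qed
qed

lemma prod_glb:
  assumes lat: "\<forall>j\<in>I. lattice_on (B j) (le j)" and x: "x \<in> PiE I B" and y: "y \<in> PiE I B"
  shows "is_glb (PiE I B) (prod_le I le) x y (\<lambda>j\<in>I. lmeet (B j) (le j) (x j) (y j))"
proof -
  have L: "\<And>j. j \<in> I \<Longrightarrow> is_glb (B j) (le j) (x j) (y j) (lmeet (B j) (le j) (x j) (y j))"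
  proof -
    fix j assume j: "j \<in> I"
    have "lattice_on (B j) (le j)" using lat j by blast
    then show "is_glb (B j) (le j) (x j) (y j) (lmeet (B j) (le j) (x j) (y j))"
      by (rule lmeet_glb) (rule PiE_mem[OF x j], rule PiE_mem[OF y j])
  qed
  show ?thesis unfolding is_glb_def prod_le_def
  proof (intro conjI ballI impI)
    have "\<forall>j\<in>I. lmeet (B j) (le j) (x j) (y j) \<in> B j" using L unfolding is_glb_def by blast
    then show "(\<lambda>j\<in>I. lmeet (B j) (le j) (x j) (y j)) \<in> PiE I B" by simp
  next
    fix j assume "j \<in> I" then show "le j ((\<lambda>j\<in>I. lmeet (B j) (le j) (x j) (y j)) j) (x j)"
      using L unfolding is_glb_def by simp
  next
    fix j assume "j \<in> I" then show "le j ((\<lambda>j\<in>I. lmeet (B j) (le j) (x j) (y j)) j) (y j)"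
      using L unfolding is_glb_def by simp
  next
    fix w j assume w: "w \<in> PiE I B" and h: "(\<forall>j\<in>I. le j (w j) (x j)) \<and> (\<forall>j\<in>I. le j (w j) (y j))"
      and j: "j \<in> I"
    have "le j (w j) (lmeet (B j) (le j) (x j) (y j))"
      using L[OF j] PiE_mem[OF w j] h j unfolding is_glb_def by blast
    then show "le j (w j) ((\<lambda>j\<in>I. lmeet (B j) (le j) (x j) (y j)) j)" using j by simp
  qed
qed

lemma prod_lattice:
  assumes lat: "\<forall>j\<in>I. lattice_on (B j) (le j)"
  shows "lattice_on (PiE I B) (prod_le I le)"
proof -
  have "\<forall>j\<in>I. poset_on (B j) (le j)" using lat unfolding lattice_on_def by blast
  then have "poset_on (PiE I B) (prod_le I le)" by (rule prod_po)
  moreover have "\<forall>x\<in>PiE I B. \<forall>y\<in>PiE I B. (\<exists>z. is_lub (PiE I B) (prod_le I le) x y z) \<and> (\<exists>z. is_glb (PiE I B) (prod_le I le) x y z)"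
  proof (intro ballI conjI)
    fix x y assume x: "x \<in> PiE I B" and y: "y \<in> PiE I B"
    show "\<exists>z. is_lub (PiE I B) (prod_le I le) x y z" using prod_lub[OF lat x y] by (intro exI)
    show "\<exists>z. is_glb (PiE I B) (prod_le I le) x y z" using prod_glb[OF lat x y] by (intro exI)
  qed
  ultimately show ?thesis unfolding lattice_on_def by (rule conjI)
qed

lemma prod_ljoin:
  assumes lat: "\<forall>j\<in>I. lattice_on (B j) (le j)" and x: "x \<in> PiE I B" and y: "y \<in> PiE I B"
  shows "ljoin (PiE I B) (prod_le I le) x y = (\<lambda>j\<in>I. ljoin (B j) (le j) (x j) (y j))"
proof -
  have "poset_on (PiE I B) (prod_le I le)" using prod_lattice[OF lat] unfolding lattice_on_def by (rule conjunct1)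
  then show ?thesis by (rule ljoin_eq) (rule prod_lub[OF assms])
qed

lemma prod_lmeet:
  assumes lat: "\<forall>j\<in>I. lattice_on (B j) (le j)" and x: "x \<in> PiE I B" and y: "y \<in> PiE I B"
  shows "lmeet (PiE I B) (prod_le I le) x y = (\<lambda>j\<in>I. lmeet (B j) (le j) (x j) (y j))"
proof -
  have "poset_on (PiE I B) (prod_le I le)" using prod_lattice[OF lat] unfolding lattice_on_def by (rule conjunct1)
  then show ?thesis by (rule lmeet_eq) (rule prod_glb[OF assms])
qed

lemma prod_covers_D:
  assumes po: "\<forall>j\<in>I. poset_on (B j) (le j)" and c: "covers (PiE I B) (prod_le I le) u v"
  shows "\<exists>j\<in>I. covers (B j) (le j) (u j) (v j) \<and> (\<forall>k\<in>I. k \<noteq> j \<longrightarrow> u k = v k)"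
proof -
  have u: "u \<in> PiE I B" and v: "v \<in> PiE I B" and uv: "prod_le I le u v" and ne: "u \<noteq> v"
    and nz: "\<not> (\<exists>z\<in>PiE I B. prod_le I le u z \<and> prod_le I le z v \<and> z \<noteq> u \<and> z \<noteq> v)"
    using c unfolding covers_def by auto
  obtain j where j: "j \<in> I" "u j \<noteq> v j" using PiE_ext[OF u v] ne by blast
  have ujB: "u j \<in> B j" and vjB: "v j \<in> B j" using PiE_mem u v j by auto
  have poj: "poset_on (B j) (le j)" using po j by blast
  define w where "w = u(j := v j)"
  have wK: "w \<in> PiE I B" unfolding w_def using upd_PiE[OF u j(1) vjB] .
  have uw: "prod_le I le u w" unfolding w_def prod_le_def
  proof
    fix k assume k: "k \<in> I"
    show "le k (u k) ((u(j := v j)) k)"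
    proof (cases "k = j")
      case True then show ?thesis using uv k unfolding prod_le_def by simp
    next
      case False then show ?thesis using po_refl[of "B k" "le k" "u k"] po k PiE_mem[OF u k] by simp
    qed
  qed
  have wv: "prod_le I le w v" unfolding w_def prod_le_def
  proof
    fix k assume k: "k \<in> I"
    show "le k ((u(j := v j)) k) (v k)"
    proof (cases "k = j")
      case True then show ?thesis using po_refl[of "B k" "le k" "v k"] po k PiE_mem[OF v k] by simp
    next
      case False then show ?thesis using uv k unfolding prod_le_def by simp
    qed
  qed
  have wu: "w \<noteq> u" using j(2) unfolding w_def by (metis fun_upd_same)
  have wv': "w = v" using nz wK uw wv wu by blast
  have same: "\<forall>k\<in>I. k \<noteq> j \<longrightarrow> u k = v k"
  proof (intro ballI impI)
    fix k assume "k \<in> I" "k \<noteq> j"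
    then show "u k = v k" using wv' unfolding w_def by (metis fun_upd_other)
  qed
  have "covers (B j) (le j) (u j) (v j)"
    unfolding covers_def
  proof (intro conjI)
    show "u j \<in> B j" "v j \<in> B j" by (fact ujB, fact vjB)
    show "le j (u j) (v j)" using uv j unfolding prod_le_def by blast
    show "u j \<noteq> v j" by (fact j(2))
    show "\<not> (\<exists>z\<in>B j. le j (u j) z \<and> le j z (v j) \<and> z \<noteq> u j \<and> z \<noteq> v j)"
    proof
      assume "\<exists>z\<in>B j. le j (u j) z \<and> le j z (v j) \<and> z \<noteq> u j \<and> z \<noteq> v j"
      then obtain p where p: "p \<in> B j" "le j (u j) p" "le j p (v j)" "p \<noteq> u j" "p \<noteq> v j" by blast
      define z where "z = u(j := p)"
      have zK: "z \<in> PiE I B" unfolding z_def using upd_PiE[OF u j(1) p(1)] .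
      have uz: "prod_le I le u z" unfolding z_def prod_le_def
      proof
        fix k assume k: "k \<in> I"
        show "le k (u k) ((u(j := p)) k)"
        proof (cases "k = j")
          case True then show ?thesis using p by simp
        next
          case False then show ?thesis using po_refl[of "B k" "le k" "u k"] po k PiE_mem[OF u k] by simp
        qed
      qed
      have zv: "prod_le I le z v" unfolding z_def prod_le_def
      proof
        fix k assume k: "k \<in> I"
        show "le k ((u(j := p)) k) (v k)"
        proof (cases "k = j")
          case True then show ?thesis using p by simp
        next
          case False then show ?thesis using uv k unfolding prod_le_def by simp
        qed
      qed
      have "z \<noteq> u" using p(4) unfolding z_def by (metis fun_upd_same)
      moreover have "z \<noteq> v" using p(5) unfolding z_def by (metis fun_upd_same)
      ultimately show False using nz zK uz zv by blast
    qed
  qed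
  then show ?thesis using j(1) same by blast
qed

lemma prod_covers_I:
  assumes po: "\<forall>j\<in>I. poset_on (B j) (le j)" and u: "u \<in> PiE I B" and v: "v \<in> PiE I B"
    and j: "j \<in> I" and cj: "covers (B j) (le j) (u j) (v j)" and same: "\<forall>k\<in>I. k \<noteq> j \<longrightarrow> u k = v k"
  shows "covers (PiE I B) (prod_le I le) u v"
  unfolding covers_def
proof (intro conjI)
  show "u \<in> PiE I B" "v \<in> PiE I B" by (fact u, fact v)
  show uv: "prod_le I le u v" unfolding prod_le_def
  proof
    fix k assume k: "k \<in> I"
    show "le k (u k) (v k)"
    proof (cases "k = j")
      case True then show ?thesis using cj unfolding covers_def by simp
    next
      case False then show ?thesis using po_refl[of "B k" "le k" "u k"] po k PiE_mem[OF u k] same by simp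
    qed
  qed
  show "u \<noteq> v" using cj unfolding covers_def by metis
  show "\<not> (\<exists>z\<in>PiE I B. prod_le I le u z \<and> prod_le I le z v \<and> z \<noteq> u \<and> z \<noteq> v)"
  proof
    assume "\<exists>z\<in>PiE I B. prod_le I le u z \<and> prod_le I le z v \<and> z \<noteq> u \<and> z \<noteq> v"
    then obtain z where z: "z \<in> PiE I B" "prod_le I le u z" "prod_le I le z v" "z \<noteq> u" "z \<noteq> v" by blast
    have other: "\<And>k. k \<in> I \<Longrightarrow> k \<noteq> j \<Longrightarrow> z k = u k"
    proof -
      fix k assume k: "k \<in> I" "k \<noteq> j"
      have "le k (u k) (z k)" "le k (z k) (v k)" using z(2,3) k(1) unfolding prod_le_def by auto
      then show "z k = u k" using po_antisym[of "B k" "le k" "z k" "u k"] po k PiE_mem[OF u k(1)] PiE_mem[OF z(1) k(1)] same by metis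
    qed
    have zj: "z j \<in> B j" "le j (u j) (z j)" "le j (z j) (v j)"
      using z j PiE_mem[OF z(1) j] unfolding prod_le_def by auto
    then have "z j = u j \<or> z j = v j" using cj unfolding covers_def by blast
    then show False
    proof
      assume "z j = u j"
      then have "z = u" using PiE_ext[OF z(1) u] other by metis
      then show False using z(4) by simp
    next
      assume "z j = v j"
      then have "z = v" using PiE_ext[OF z(1) v] other same by metis
      then show False using z(5) by simp
    qed
  qed
qed

context
  fixes I :: "nat set" and B :: "nat \<Rightarrow> 'b set" and le :: "nat \<Rightarrow> 'b \<Rightarrow> 'b \<Rightarrow> bool" and e :: "nat \<Rightarrow> 'b"
  assumes lat: "\<forall>j\<in>I. lattice_on (B j) (le j)" and fl: "\<forall>j\<in>I. finite_length (B j) (le j)"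
    and eK: "e \<in> PiE I B" and jp: "join_prime (PiE I B) (prod_le I le) e"
    and nb: "e \<noteq> lbot (PiE I B) (prod_le I le)"
begin

lemma latj: "j \<in> I \<Longrightarrow> lattice_on (B j) (le j)" using lat by blast
lemma poj: "j \<in> I \<Longrightarrow> poset_on (B j) (le j)" using latj unfolding lattice_on_def by blast
lemma poK: "poset_on (PiE I B) (prod_le I le)" by (rule prod_po) (use poj in blast)
lemma latK: "lattice_on (PiE I B) (prod_le I le)" by (rule prod_lattice[OF lat])

lemma bot_ex: "j \<in> I \<Longrightarrow> lbot (B j) (le j) \<in> B j \<and> (\<forall>x\<in>B j. le j (lbot (B j) (le j)) x)"
proof -
  assume j: "j \<in> I"
  have ne: "B j \<noteq> {}" using PiE_mem[OF eK j] by blast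
  have "finite_length (B j) (le j)" using fl j by blast
  then obtain b where b: "b \<in> B j" "\<forall>x\<in>B j. le j b x" using has_bot[OF latj[OF j] _ ne] by blast
  have "lbot (B j) (le j) = b" using lbot_eq[OF poj[OF j] b(1) b(2)] .
  then show ?thesis using b by simp
qed

lemma top_ex: "j \<in> I \<Longrightarrow> ltop (B j) (le j) \<in> B j \<and> (\<forall>x\<in>B j. le j x (ltop (B j) (le j)))"
proof -
  assume j: "j \<in> I"
  have ne: "B j \<noteq> {}" using PiE_mem[OF eK j] by blast
  have "finite_length (B j) (le j)" using fl j by blast
  then obtain b where b: "b \<in> B j" "\<forall>x\<in>B j. le j x b" using has_top[OF latj[OF j] _ ne] by blast
  have "ltop (B j) (le j) = b" using ltop_eq[OF poj[OF j] b(1) b(2)] .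
  then show ?thesis using b by simp
qed

lemma botK_mem: "(\<lambda>j\<in>I. lbot (B j) (le j)) \<in> PiE I B"
proof -
  have "\<forall>j\<in>I. lbot (B j) (le j) \<in> B j" using bot_ex by blast
  then show ?thesis by simp
qed

lemma lbotK: "lbot (PiE I B) (prod_le I le) = (\<lambda>j\<in>I. lbot (B j) (le j))"
proof (rule lbot_eq[OF poK botK_mem])
  show "\<forall>x\<in>PiE I B. prod_le I le (\<lambda>j\<in>I. lbot (B j) (le j)) x"
    unfolding prod_le_def
  proof (intro ballI)
    fix x j assume x: "x \<in> PiE I B" and j: "j \<in> I"
    show "le j ((\<lambda>j\<in>I. lbot (B j) (le j)) j) (x j)" using bot_ex[OF j] PiE_mem[OF x j] j by simp
  qed
qed

lemma ex_i: "\<exists>i\<in>I. e i \<noteq> lbot (B i) (le i)"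
proof (rule ccontr)
  assume "\<not> ?thesis"
  then have h: "\<forall>i\<in>I. e i = lbot (B i) (le i)" by blast
  have "e = (\<lambda>j\<in>I. lbot (B j) (le j))"
  proof (rule PiE_ext[OF eK botK_mem])
    fix i assume "i \<in> I" then show "e i = (\<lambda>j\<in>I. lbot (B j) (le j)) i" using h by simp
  qed
  then show False using nb lbotK by simp
qed

lemma uniq_i:
  assumes i: "i \<in> I" and k: "k \<in> I" and ei: "e i \<noteq> lbot (B i) (le i)" and ek: "e k \<noteq> lbot (B k) (le k)"
  shows "i = k"
proof (rule ccontr)
  assume neq: "i \<noteq> k"
  define u where "u = e(k := lbot (B k) (le k))"
  define v where "v = e(i := lbot (B i) (le i))"
  have uK: "u \<in> PiE I B" unfolding u_def using upd_PiE[OF eK k] bot_ex[OF k] by blast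
  have vK: "v \<in> PiE I B" unfolding v_def using upd_PiE[OF eK i] bot_ex[OF i] by blast
  have ekB: "e k \<in> B k" and eiB: "e i \<in> B i" using PiE_mem[OF eK] i k by auto
  have lub: "is_lub (PiE I B) (prod_le I le) u v e"
    unfolding is_lub_def prod_le_def
  proof (intro conjI ballI impI)
    show "e \<in> PiE I B" by (fact eK)
  next
    fix j assume j: "j \<in> I"
    show "le j (u j) (e j)"
    proof (cases "j = k")
      case True then show ?thesis unfolding u_def using bot_ex[OF k] ekB by simp
    next
      case False then show ?thesis unfolding u_def using po_refl[OF poj[OF j] PiE_mem[OF eK j]] by simp
    qed
  next
    fix j assume j: "j \<in> I"
    show "le j (v j) (e j)"
    proof (cases "j = i")
      case True then show ?thesis unfolding v_def using bot_ex[OF i] eiB by simp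
    next
      case False then show ?thesis unfolding v_def using po_refl[OF poj[OF j] PiE_mem[OF eK j]] by simp
    qed
  next
    fix w j assume w: "w \<in> PiE I B" and h: "(\<forall>j\<in>I. le j (u j) (w j)) \<and> (\<forall>j\<in>I. le j (v j) (w j))"
      and j: "j \<in> I"
    show "le j (e j) (w j)"
    proof (cases "j = k")
      case True
      then have "j \<noteq> i" using neq by simp
      then have "v j = e j" unfolding v_def by simp
      then show ?thesis using h j by metis
    next
      case False
      then have "u j = e j" unfolding u_def by simp
      then show ?thesis using h j by metis
    qed
  qed
  then have "ljoin (PiE I B) (prod_le I le) u v = e" by (rule ljoin_eq[OF poK])
  moreover have "prod_le I le e e" using po_refl[OF poK eK] .
  ultimately have "prod_le I le e (ljoin (PiE I B) (prod_le I le) u v)" by simp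
  then have "prod_le I le e u \<or> prod_le I le e v" using jp uK vK unfolding join_prime_def by blast
  then show False
  proof
    assume "prod_le I le e u"
    then have "le k (e k) (u k)" using k unfolding prod_le_def by blast
    then have "le k (e k) (lbot (B k) (le k))" unfolding u_def by simp
    then have "e k = lbot (B k) (le k)" using po_antisym[OF poj[OF k] ekB] bot_ex[OF k] ekB by blast
    then show False using ek by simp
  next
    assume "prod_le I le e v"
    then have "le i (e i) (v i)" using i unfolding prod_le_def by blast
    then have "le i (e i) (lbot (B i) (le i))" unfolding v_def by simp
    then have "e i = lbot (B i) (le i)" using po_antisym[OF poj[OF i] eiB] bot_ex[OF i] eiB by blast
    then show False using ei by simp
  qed
qed


context
  fixes i :: nat and f :: "nat \<Rightarrow> 'b"
  assumes iI: "i \<in> I" and ei: "e i \<noteq> lbot (B i) (le i)" and fK: "f \<in> PiE I B"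
    and fi: "f i = ltop (B i) (le i)"
begin

lemma others: "j \<in> I \<Longrightarrow> j \<noteq> i \<Longrightarrow> e j = lbot (B j) (le j)"
  using uniq_i[OF iI _ ei] by blast

lemma le_e: "w \<in> PiE I B \<Longrightarrow> prod_le I le e w \<longleftrightarrow> le i (e i) (w i)"
proof
  assume "prod_le I le e w" then show "le i (e i) (w i)" using iI unfolding prod_le_def by blast
next
  assume w: "w \<in> PiE I B" and h: "le i (e i) (w i)"
  show "prod_le I le e w" unfolding prod_le_def
  proof
    fix j assume j: "j \<in> I"
    show "le j (e j) (w j)"
    proof (cases "j = i")
      case True then show ?thesis using h by simp
    next
      case False then show ?thesis using others[OF j False] bot_ex[OF j] PiE_mem[OF w j] by simp
    qed
  qed
qed

lemma ef: "prod_le I le e f"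
proof -
  have "le i (e i) (f i)" using fi top_ex[OF iI] PiE_mem[OF eK iI] by simp
  then show ?thesis using le_e[OF fK] by simp
qed

lemma jp_i: "join_prime (B i) (le i) (e i)"
  unfolding join_prime_def
proof (intro conjI ballI impI)
  show "e i \<in> B i" using PiE_mem[OF eK iI] .
  fix p q assume p: "p \<in> B i" and q: "q \<in> B i" and h: "le i (e i) (ljoin (B i) (le i) p q)"
  define u where "u = e(i := p)"
  define v where "v = e(i := q)"
  have uK: "u \<in> PiE I B" unfolding u_def using upd_PiE[OF eK iI p] .
  have vK: "v \<in> PiE I B" unfolding v_def using upd_PiE[OF eK iI q] .
  have J: "ljoin (PiE I B) (prod_le I le) u v = (\<lambda>j\<in>I. ljoin (B j) (le j) (u j) (v j))"
    by (rule prod_ljoin[OF lat uK vK])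
  have JK: "ljoin (PiE I B) (prod_le I le) u v \<in> PiE I B"
    using ljoin_lub[OF latK uK vK] unfolding is_lub_def by blast
  have "le i (e i) (ljoin (PiE I B) (prod_le I le) u v i)" using J h iI unfolding u_def v_def by simp
  then have "prod_le I le e (ljoin (PiE I B) (prod_le I le) u v)" using le_e[OF JK] by simp
  then have "prod_le I le e u \<or> prod_le I le e v" using jp uK vK unfolding join_prime_def by blast
  then show "le i (e i) p \<or> le i (e i) q" using le_e[OF uK] le_e[OF vK] unfolding u_def v_def by simp
qed

lemma L_sub: "PiE I B - interval (PiE I B) (prod_le I le) e f \<subseteq> PiE I B" by blast

lemma glbL:
  assumes x: "x \<in> PiE I B - interval (PiE I B) (prod_le I le) e f"
    and y: "y \<in> PiE I B - interval (PiE I B) (prod_le I le) e f"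
  shows "\<exists>z. is_glb (PiE I B - interval (PiE I B) (prod_le I le) e f) (prod_le I le) x y z"
proof -
  let ?L = "PiE I B - interval (PiE I B) (prod_le I le) e f"
  let ?m = "lmeet (PiE I B) (prod_le I le) x y"
  have xK: "x \<in> PiE I B" and yK: "y \<in> PiE I B" using x y by auto
  have glbK: "is_glb (PiE I B) (prod_le I le) x y ?m" using lmeet_glb[OF latK xK yK] .
  then have mK: "?m \<in> PiE I B" and mx: "prod_le I le ?m x" and my: "prod_le I le ?m y"
    unfolding is_glb_def by auto
  show ?thesis
  proof (cases "?m \<in> ?L")
    case True
    have "is_glb ?L (prod_le I le) x y ?m" using glbK True unfolding is_glb_def by blast
    then show ?thesis by blast
  next
    case False
    then have mint: "prod_le I le e ?m" "prod_le I le ?m f" using mK unfolding interval_def by auto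
    have poi: "poset_on (B i) (le i)" using poj[OF iI] .
    have miB: "?m i \<in> B i" using PiE_mem[OF mK iI] .
    have eiB: "e i \<in> B i" using PiE_mem[OF eK iI] .
    define D where "D = {w \<in> B i. le i w (?m i) \<and> \<not> le i (e i) w}"
    have DB: "D \<subseteq> B i" unfolding D_def by blast
    have "lbot (B i) (le i) \<in> D"
    proof -
      have b1: "lbot (B i) (le i) \<in> B i" and b2: "\<forall>x\<in>B i. le i (lbot (B i) (le i)) x"
        using bot_ex[OF iI] by auto
      have "\<not> le i (e i) (lbot (B i) (le i))"
      proof
        assume "le i (e i) (lbot (B i) (le i))"
        then have "e i = lbot (B i) (le i)" using po_antisym[OF poi eiB b1] b2 eiB by blast
        then show False using ei by simp
      qed
      then show ?thesis unfolding D_def using b1 b2 miB by blast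
    qed
    then have Dne: "D \<noteq> {}" by blast
    have dir: "\<forall>u\<in>D. \<forall>v\<in>D. \<exists>w\<in>D. le i u w \<and> le i v w"
    proof (intro ballI)
      fix u v assume u: "u \<in> D" and v: "v \<in> D"
      have uB: "u \<in> B i" and vB: "v \<in> B i" using u v unfolding D_def by auto
      have lub: "is_lub (B i) (le i) u v (ljoin (B i) (le i) u v)" using ljoin_lub[OF latj[OF iI] uB vB] .
      have jB: "ljoin (B i) (le i) u v \<in> B i" using lub unfolding is_lub_def by blast
      have "le i u (?m i)" "le i v (?m i)" using u v unfolding D_def by auto
      then have jm: "le i (ljoin (B i) (le i) u v) (?m i)" using lub miB unfolding is_lub_def by blast
      have "\<not> le i (e i) (ljoin (B i) (le i) u v)"
      proof
        assume "le i (e i) (ljoin (B i) (le i) u v)"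
        then have "le i (e i) u \<or> le i (e i) v" using jp_i uB vB unfolding join_prime_def by blast
        then show False using u v unfolding D_def by blast
      qed
      then have "ljoin (B i) (le i) u v \<in> D" unfolding D_def using jB jm by blast
      then show "\<exists>w\<in>D. le i u w \<and> le i v w" using lub unfolding is_lub_def by blast
    qed
    have fli: "finite_length (B i) (le i)" using fl iI by blast
    obtain g where g: "g \<in> D" "\<forall>w\<in>D. le i w g" using greatest_exists[OF poi fli DB Dne dir] by blast
    have gB: "g \<in> B i" and gm: "le i g (?m i)" and ng: "\<not> le i (e i) g" using g(1) unfolding D_def by auto
    define z where "z = ?m(i := g)"
    have zK: "z \<in> PiE I B" unfolding z_def using upd_PiE[OF mK iI gB] .
    have zL: "z \<in> ?L"
    proof
      show "z \<in> PiE I B" by (fact zK)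
      show "z \<notin> interval (PiE I B) (prod_le I le) e f"
      proof
        assume "z \<in> interval (PiE I B) (prod_le I le) e f"
        then have "prod_le I le e z" unfolding interval_def by blast
        then have "le i (e i) (z i)" using le_e[OF zK] by blast
        then show False using ng unfolding z_def by simp
      qed
    qed
    have zle: "prod_le I le z w" if w: "w \<in> PiE I B" and mw: "prod_le I le ?m w" for w
      unfolding prod_le_def
    proof
      fix j assume j: "j \<in> I"
      show "le j (z j) (w j)"
      proof (cases "j = i")
        case True
        have "le i (?m i) (w i)" using mw iI unfolding prod_le_def by blast
        then have "le i g (w i)" using po_trans[OF poi gB miB PiE_mem[OF w iI] gm] by blast
        then show ?thesis using True unfolding z_def by simp
      next
        case False
        then show ?thesis using mw j unfolding z_def prod_le_def by simp
      qed
    qed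
    have "is_glb ?L (prod_le I le) x y z"
      unfolding is_glb_def
    proof (intro conjI ballI impI)
      show "z \<in> ?L" by (fact zL)
      show "prod_le I le z x" using zle[OF xK mx] .
      show "prod_le I le z y" using zle[OF yK my] .
    next
      fix w assume wL: "w \<in> ?L" and h: "prod_le I le w x \<and> prod_le I le w y"
      have wK: "w \<in> PiE I B" using wL by blast
      have wm: "prod_le I le w ?m" using glbK wK h unfolding is_glb_def by blast
      have wf: "prod_le I le w f" using po_trans[OF poK wK mK fK] wm mint(2) by blast
      have "\<not> prod_le I le e w" using wL wf wK unfolding interval_def by blast
      then have nw: "\<not> le i (e i) (w i)" using le_e[OF wK] by blast
      have wi: "le i (w i) (?m i)" using wm iI unfolding prod_le_def by blast
      have "w i \<in> D" unfolding D_def using nw wi PiE_mem[OF wK iI] by blast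
      then have wg: "le i (w i) g" using g(2) by blast
      show "prod_le I le w z" unfolding prod_le_def
      proof
        fix j assume j: "j \<in> I"
        show "le j (w j) (z j)"
        proof (cases "j = i")
          case True then show ?thesis using wg unfolding z_def by simp
        next
          case False then show ?thesis using wm j unfolding z_def prod_le_def by simp
        qed
      qed
    qed
    then show ?thesis by blast
  qed
qed

lemma latL: "lattice_on (PiE I B - interval (PiE I B) (prod_le I le) e f) (prod_le I le)"
  unfolding lattice_on_def
proof (intro conjI ballI)
  show "poset_on (PiE I B - interval (PiE I B) (prod_le I le) e f) (prod_le I le)"
    using po_subset[OF poK L_sub] .
next
  fix x y assume x: "x \<in> PiE I B - interval (PiE I B) (prod_le I le) e f"
    and y: "y \<in> PiE I B - interval (PiE I B) (prod_le I le) e f"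
  show "\<exists>z. is_lub (PiE I B - interval (PiE I B) (prod_le I le) e f) (prod_le I le) x y z"
    using L_join(2)[OF latK jp fK x y] by (intro exI)
  show "\<exists>z. is_glb (PiE I B - interval (PiE I B) (prod_le I le) e f) (prod_le I le) x y z"
    using glbL[OF x y] .
qed



lemma coversL:
  assumes c: "covers (PiE I B - interval (PiE I B) (prod_le I le) e f) (prod_le I le) u v"
  shows "covers (PiE I B) (prod_le I le) u v"
proof -
  let ?L = "PiE I B - interval (PiE I B) (prod_le I le) e f"
  have uL: "u \<in> ?L" and vL: "v \<in> ?L" and uv: "prod_le I le u v" and ne: "u \<noteq> v"
    and nz: "\<not> (\<exists>z\<in>?L. prod_le I le u z \<and> prod_le I le z v \<and> z \<noteq> u \<and> z \<noteq> v)"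
    using c unfolding covers_def by auto
  have uK: "u \<in> PiE I B" and vK: "v \<in> PiE I B" using uL vL by auto
  have "\<not> (\<exists>z\<in>PiE I B. prod_le I le u z \<and> prod_le I le z v \<and> z \<noteq> u \<and> z \<noteq> v)"
  proof
    assume "\<exists>z\<in>PiE I B. prod_le I le u z \<and> prod_le I le z v \<and> z \<noteq> u \<and> z \<noteq> v"
    then obtain z where z: "z \<in> PiE I B" "prod_le I le u z" "prod_le I le z v" "z \<noteq> u" "z \<noteq> v" by blast
    have "z \<notin> ?L" using nz z by blast
    then have zint: "prod_le I le e z" "prod_le I le z f" using z(1) unfolding interval_def by auto
    have uf: "prod_le I le u f" using po_trans[OF poK uK z(1) fK] z(2) zint(2) by blast
    have "\<not> prod_le I le e u" using uL uf unfolding interval_def by blast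
    then have nu: "\<not> le i (e i) (u i)" using le_e[OF uK] by blast
    have ev: "prod_le I le e v" using po_trans[OF poK eK z(1) vK] zint(1) z(3) by blast
    have "\<not> prod_le I le v f" using vL ev unfolding interval_def by blast
    then obtain j where j: "j \<in> I" "\<not> le j (v j) (f j)" unfolding prod_le_def by blast
    have ji: "j \<noteq> i"
    proof
      assume "j = i"
      then have "le j (v j) (f j)" using fi top_ex[OF iI] PiE_mem[OF vK iI] by simp
      then show False using j by simp
    qed
    define w where "w = v(i := u i)"
    have wK: "w \<in> PiE I B" unfolding w_def using upd_PiE[OF vK iI PiE_mem[OF uK iI]] .
    have uw: "prod_le I le u w" unfolding prod_le_def
    proof
      fix k assume k: "k \<in> I"
      show "le k (u k) (w k)"
      proof (cases "k = i")
        case True then show ?thesis unfolding w_def using po_refl[OF poj[OF k] PiE_mem[OF uK k]] by simp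
      next
        case False then show ?thesis unfolding w_def using uv k unfolding prod_le_def by simp
      qed
    qed
    have wv: "prod_le I le w v" unfolding prod_le_def
    proof
      fix k assume k: "k \<in> I"
      show "le k (w k) (v k)"
      proof (cases "k = i")
        case True then show ?thesis unfolding w_def using uv k unfolding prod_le_def by simp
      next
        case False then show ?thesis unfolding w_def using po_refl[OF poj[OF k] PiE_mem[OF vK k]] by simp
      qed
    qed
    have wj: "w j = v j" unfolding w_def using ji by simp
    have "\<not> prod_le I le w f" using j wj unfolding prod_le_def by metis
    then have wL: "w \<in> ?L" using wK unfolding interval_def by blast
    have "w = u \<or> w = v" using nz wL uw wv by blast
    then show False
    proof
      assume "w = u"
      then have "u j = v j" using wj by simp
      moreover have "le j (u j) (f j)" using uf j unfolding prod_le_def by blast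
      ultimately show False using j by simp
    next
      assume "w = v"
      then have wi: "u i = v i" unfolding w_def by (metis fun_upd_same)
      have "le i (e i) (z i)" "le i (z i) (v i)" using zint(1) z(3) iI unfolding prod_le_def by auto
      then have "le i (e i) (v i)"
        using po_trans[OF poj[OF iI] PiE_mem[OF eK iI] PiE_mem[OF z(1) iI] PiE_mem[OF vK iI]] by blast
      then show False using nu wi by simp
    qed
  qed
  then show ?thesis unfolding covers_def using uK vK uv ne by blast
qed

lemma usmK:
  assumes usm: "\<forall>j\<in>I. upper_semimodular (B j) (le j)"
  shows "upper_semimodular (PiE I B) (prod_le I le)"
  unfolding upper_semimodular_def
proof (intro conjI ballI impI)
  show "lattice_on (PiE I B) (prod_le I le)" by (rule latK)
  fix x y assume xK: "x \<in> PiE I B" and yK: "y \<in> PiE I B"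
    and c: "covers (PiE I B) (prod_le I le) (lmeet (PiE I B) (prod_le I le) x y) x"
  have poall: "\<forall>j\<in>I. poset_on (B j) (le j)" using poj by blast
  obtain j where j: "j \<in> I" and cj: "covers (B j) (le j) (lmeet (PiE I B) (prod_le I le) x y j) (x j)"
    and same: "\<forall>k\<in>I. k \<noteq> j \<longrightarrow> lmeet (PiE I B) (prod_le I le) x y k = x k"
    using prod_covers_D[OF poall c] by blast
  have M: "lmeet (PiE I B) (prod_le I le) x y = (\<lambda>j\<in>I. lmeet (B j) (le j) (x j) (y j))"
    by (rule prod_lmeet[OF lat xK yK])
  have J: "ljoin (PiE I B) (prod_le I le) x y = (\<lambda>j\<in>I. ljoin (B j) (le j) (x j) (y j))"
    by (rule prod_ljoin[OF lat xK yK])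
  have JK: "ljoin (PiE I B) (prod_le I le) x y \<in> PiE I B"
    using ljoin_lub[OF latK xK yK] unfolding is_lub_def by blast
  have cj': "covers (B j) (le j) (lmeet (B j) (le j) (x j) (y j)) (x j)" using cj M j by simp
  have "upper_semimodular (B j) (le j)" using usm j by blast
  then have U: "\<forall>a\<in>B j. \<forall>b\<in>B j. covers (B j) (le j) (lmeet (B j) (le j) a b) a \<longrightarrow> covers (B j) (le j) b (ljoin (B j) (le j) a b)"
    unfolding upper_semimodular_def by (rule conjunct2)
  have cy: "covers (B j) (le j) (y j) (ljoin (B j) (le j) (x j) (y j))"
    using U[rule_format, OF PiE_mem[OF xK j] PiE_mem[OF yK j] cj'] .
  have same2: "\<forall>k\<in>I. k \<noteq> j \<longrightarrow> y k = ljoin (PiE I B) (prod_le I le) x y k"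
  proof (intro ballI impI)
    fix k assume k: "k \<in> I" "k \<noteq> j"
    have "lmeet (B k) (le k) (x k) (y k) = x k" using same k M by simp
    moreover have "le k (lmeet (B k) (le k) (x k) (y k)) (y k)"
      using lmeet_glb[OF latj[OF k(1)] PiE_mem[OF xK k(1)] PiE_mem[OF yK k(1)]] unfolding is_glb_def by blast
    ultimately have "le k (x k) (y k)" by simp
    then have "ljoin (B k) (le k) (x k) (y k) = y k"
      using ljoin_le[OF latj[OF k(1)] PiE_mem[OF xK k(1)] PiE_mem[OF yK k(1)]] by blast
    then show "y k = ljoin (PiE I B) (prod_le I le) x y k" using J k by simp
  qed
  have RK: "(\<lambda>j\<in>I. ljoin (B j) (le j) (x j) (y j)) \<in> PiE I B" using JK J by simp
  have "covers (PiE I B) (prod_le I le) y (\<lambda>j\<in>I. ljoin (B j) (le j) (x j) (y j))"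
  proof (rule prod_covers_I[OF poall yK RK j])
    show "covers (B j) (le j) (y j) ((\<lambda>j\<in>I. ljoin (B j) (le j) (x j) (y j)) j)" using cy j by simp
    show "\<forall>k\<in>I. k \<noteq> j \<longrightarrow> y k = (\<lambda>j\<in>I. ljoin (B j) (le j) (x j) (y j)) k" using same2 J by simp
  qed
  then show "covers (PiE I B) (prod_le I le) y (ljoin (PiE I B) (prod_le I le) x y)" using J by simp
qed

lemma usmL:
  assumes usm: "\<forall>j\<in>I. upper_semimodular (B j) (le j)"
  shows "upper_semimodular (PiE I B - interval (PiE I B) (prod_le I le) e f) (prod_le I le)"
  unfolding upper_semimodular_def
proof (intro conjI ballI impI)
  let ?L = "PiE I B - interval (PiE I B) (prod_le I le) e f"
  show latL': "lattice_on ?L (prod_le I le)" by (rule latL)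
  have poL: "poset_on ?L (prod_le I le)" using latL' unfolding lattice_on_def by (rule conjunct1)
  fix x y assume x: "x \<in> ?L" and y: "y \<in> ?L"
    and c: "covers ?L (prod_le I le) (lmeet ?L (prod_le I le) x y) x"
  have xK: "x \<in> PiE I B" and yK: "y \<in> PiE I B" using x y by auto
  have jeq: "ljoin ?L (prod_le I le) x y = ljoin (PiE I B) (prod_le I le) x y"
    using ljoin_eq[OF poL L_join(2)[OF latK jp fK x y]] .
  have jL: "ljoin (PiE I B) (prod_le I le) x y \<in> ?L" using L_join(1)[OF latK jp fK x y] .
  let ?mL = "lmeet ?L (prod_le I le) x y"
  let ?mK = "lmeet (PiE I B) (prod_le I le) x y"
  have glbL': "is_glb ?L (prod_le I le) x y ?mL" using lmeet_glb[OF latL' x y] .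
  have glbK: "is_glb (PiE I B) (prod_le I le) x y ?mK" using lmeet_glb[OF latK xK yK] .
  have cK: "covers (PiE I B) (prod_le I le) ?mL x" using coversL[OF c] .
  show "covers ?L (prod_le I le) y (ljoin ?L (prod_le I le) x y)"
  proof (cases "?mK \<in> ?L")
    case True
    have "is_glb ?L (prod_le I le) x y ?mK" using glbK True unfolding is_glb_def by blast
    then have "?mL = ?mK" using lmeet_eq[OF poL] by blast
    then have "covers (PiE I B) (prod_le I le) ?mK x" using cK by simp
    then have "covers (PiE I B) (prod_le I le) y (ljoin (PiE I B) (prod_le I le) x y)"
      using usmK[OF usm] xK yK unfolding upper_semimodular_def by blast
    then show ?thesis using covers_sub[OF _ L_sub y jL] jeq by simp
  next
    case False
    have mLK: "?mL \<in> PiE I B" and mLx: "prod_le I le ?mL x" and mLy: "prod_le I le ?mL y"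
      using glbL' unfolding is_glb_def by auto
    have mKK: "?mK \<in> PiE I B" and mKx: "prod_le I le ?mK x" and mKy: "prod_le I le ?mK y"
      using glbK unfolding is_glb_def by auto
    have mLmK: "prod_le I le ?mL ?mK" using glbK mLK mLx mLy unfolding is_glb_def by blast
    have nz: "\<not> (\<exists>z\<in>PiE I B. prod_le I le ?mL z \<and> prod_le I le z x \<and> z \<noteq> ?mL \<and> z \<noteq> x)"
      and ne: "?mL \<noteq> x" using cK unfolding covers_def by auto
    have "?mK = ?mL \<or> ?mK = x" using nz mKK mLmK mKx by blast
    then show ?thesis
    proof
      assume "?mK = ?mL"
      then have "?mK \<in> ?L" using glbL' unfolding is_glb_def by simp
      then show ?thesis using False by simp
    next
      assume "?mK = x"
      then have xy: "prod_le I le x y" using mKy by simp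
      have "is_glb ?L (prod_le I le) x y x" unfolding is_glb_def
        using x xy po_refl[OF poL x] by blast
      then have "?mL = x" using lmeet_eq[OF poL] by blast
      then show ?thesis using ne by simp
    qed
  qed
qed

end
end

theorem proposition2p1:
  shows
  "(\<forall>(A :: 'a set) le e f.
      lattice_on A le \<and> finite_length A le \<and>
      join_prime A le e \<and> e \<noteq> lbot A le \<and> f \<in> A \<and> le e f
      \<longrightarrow> lattice_on (A - interval A le e f) le)
   \<and>
   (\<forall>(t::nat) (B :: nat \<Rightarrow> 'b set) (leB :: nat \<Rightarrow> 'b \<Rightarrow> 'b \<Rightarrow> bool) e.
      let I = {1..t}; K = prod_carrier I B; leK = prod_le I leB in
      0 < t \<and>
      (\<forall>j\<in>I. upper_semimodular (B j) (leB j) \<and> finite_length (B j) (leB j)) \<and>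
      e \<in> K \<and> join_prime K leK e \<and> e \<noteq> lbot K leK
      \<longrightarrow>
        (\<exists>!i. i \<in> I \<and> e i \<noteq> lbot (B i) (leB i)) \<and>
        (\<forall>i f. i \<in> I \<and> e i \<noteq> lbot (B i) (leB i) \<and> f \<in> K \<and> f i = ltop (B i) (leB i)
           \<longrightarrow> (let L = K - interval K leK e f in
                 upper_semimodular L leK \<and>
                 (\<forall>x\<in>L. \<forall>y\<in>L. ljoin K leK x y \<in> L))))"
proof (intro conjI allI impI)
  fix A :: "'a set" and le e f
  assume h: "lattice_on A le \<and> finite_length A le \<and> join_prime A le e \<and> e \<noteq> lbot A le \<and> f \<in> A \<and> le e f"
  then show "lattice_on (A - interval A le e f) le"
    by (elim conjE) (rule part1)
next
  fix t :: nat and B :: "nat \<Rightarrow> 'b set" and leB :: "nat \<Rightarrow> 'b \<Rightarrow> 'b \<Rightarrow> bool" and e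
  show "let I = {1..t}; K = prod_carrier I B; leK = prod_le I leB in
      0 < t \<and>
      (\<forall>j\<in>I. upper_semimodular (B j) (leB j) \<and> finite_length (B j) (leB j)) \<and>
      e \<in> K \<and> join_prime K leK e \<and> e \<noteq> lbot K leK
      \<longrightarrow>
        (\<exists>!i. i \<in> I \<and> e i \<noteq> lbot (B i) (leB i)) \<and>
        (\<forall>i f. i \<in> I \<and> e i \<noteq> lbot (B i) (leB i) \<and> f \<in> K \<and> f i = ltop (B i) (leB i)
           \<longrightarrow> (let L = K - interval K leK e f in
                 upper_semimodular L leK \<and>
                 (\<forall>x\<in>L. \<forall>y\<in>L. ljoin K leK x y \<in> L)))"
    unfolding Let_def prod_carrier_def
  proof (intro impI)
    let ?I = "{1..t}"
    assume h: "0 < t \<and> (\<forall>j\<in>?I. upper_semimodular (B j) (leB j) \<and> finite_length (B j) (leB j)) \<and>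
      e \<in> PiE ?I B \<and> join_prime (PiE ?I B) (prod_le ?I leB) e \<and> e \<noteq> lbot (PiE ?I B) (prod_le ?I leB)"
    have usm: "\<forall>j\<in>?I. upper_semimodular (B j) (leB j)" using h by blast
    have fl: "\<forall>j\<in>?I. finite_length (B j) (leB j)" using h by blast
    have lat: "\<forall>j\<in>?I. lattice_on (B j) (leB j)" using usm unfolding upper_semimodular_def by blast
    have eK: "e \<in> PiE ?I B" using h by blast
    have jp: "join_prime (PiE ?I B) (prod_le ?I leB) e" using h by blast
    have nb: "e \<noteq> lbot (PiE ?I B) (prod_le ?I leB)" using h by blast
    note ctx = lat fl eK jp nb
    show "(\<exists>!i. i \<in> ?I \<and> e i \<noteq> lbot (B i) (leB i)) \<and>
        (\<forall>i f. i \<in> ?I \<and> e i \<noteq> lbot (B i) (leB i) \<and> f \<in> PiE ?I B \<and> f i = ltop (B i) (leB i)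
           \<longrightarrow> upper_semimodular (PiE ?I B - interval (PiE ?I B) (prod_le ?I leB) e f) (prod_le ?I leB) \<and>
                 (\<forall>x\<in>PiE ?I B - interval (PiE ?I B) (prod_le ?I leB) e f. \<forall>y\<in>PiE ?I B - interval (PiE ?I B) (prod_le ?I leB) e f.
                    ljoin (PiE ?I B) (prod_le ?I leB) x y \<in> PiE ?I B - interval (PiE ?I B) (prod_le ?I leB) e f))"
    proof (intro conjI allI impI)
      obtain i where i: "i \<in> ?I" "e i \<noteq> lbot (B i) (leB i)" using ex_i[OF ctx] by blast
      show "\<exists>!i. i \<in> ?I \<and> e i \<noteq> lbot (B i) (leB i)"
      proof (rule ex1I[of _ i])
        show "i \<in> ?I \<and> e i \<noteq> lbot (B i) (leB i)" using i by blast
        fix k assume "k \<in> ?I \<and> e k \<noteq> lbot (B k) (leB k)"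
        then show "k = i" using uniq_i[OF ctx i(1) _ i(2)] by blast
      qed
    next
      fix i f assume hi: "i \<in> ?I \<and> e i \<noteq> lbot (B i) (leB i) \<and> f \<in> PiE ?I B \<and> f i = ltop (B i) (leB i)"
      have iI: "i \<in> ?I" and ei: "e i \<noteq> lbot (B i) (leB i)" and fK: "f \<in> PiE ?I B"
        and fi: "f i = ltop (B i) (leB i)" using hi by auto
      show "upper_semimodular (PiE ?I B - interval (PiE ?I B) (prod_le ?I leB) e f) (prod_le ?I leB)"
        by (rule usmL[OF ctx iI ei fK fi usm])
      show "\<forall>x\<in>PiE ?I B - interval (PiE ?I B) (prod_le ?I leB) e f. \<forall>y\<in>PiE ?I B - interval (PiE ?I B) (prod_le ?I leB) e f.
                    ljoin (PiE ?I B) (prod_le ?I leB) x y \<in> PiE ?I B - interval (PiE ?I B) (prod_le ?I leB) e f"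
        using L_join(1)[OF latK[OF ctx] jp fK] by blast
    qed
  qed
qed

end
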